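(* Under Rayleigh fading (all $m_{ij}=1$), for every target rate $r>0$, $P_{\rm r}>0$ and $\mathcal C_x\in[0,1)$, \[ \mathcal P_{\rm sr}(P_{\rm r},\mathcal C_x)\le 1-\exp\!\left(-\frac{P_{\rm r}\pi_{\rm rr}+1}{P_{\rm s}\pi_{\rm sr}}\Psi_r(\alpha\,\mathcal C_x)\right)=:\mathcal P^{\rm UB}_{\rm sr,RF}(P_{\rm r},\mathcal C_x), \qquad \alpha=\frac{P_{\rm r}\pi_{\rm rr}}{P_{\rm r}\pi_{\rm rr}+1}. \]
   Context: Let $P_{\rm s}>0$, $P_{\rm r}>0$ be the source and relay transmit powers. Rayleigh fading: $g_{\rm sr},g_{\rm rr}$ are independent exponential random variables with means $\pi_{\rm sr},\pi_{\rm rr}>0$. For $\mathcal C_x\in[0,1)$ define $R_{\rm sr}(P_{\rm r},\mathcal C_x)=\tfrac12\log_2\frac{(P_{\rm s}g_{\rm sr}+P_{\rm r}g_{\rm rr}+1)^2-(P_{\rm r}g_{\rm rr}\mathcal C_x)^2}{(P_{\rm r}g_{\rm rr}+1)^2-(P_{\rm r}g_{\rm rr}\mathcal C_x)^2}$. For a target rate $r>0$ put $\gamma=2^{2r}-1$ and $\Psi_r(x)=\sqrt{1+\gamma(1-x^2)}-1$. The S–R outage probability is $\mathcal P_{\rm sr}=\mathbb P\{R_{\rm sr}<r\}$. *)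

theory Defs
  imports "HOL-Probability.Probability"
begin

definition R_sr :: "real \<Rightarrow> real \<Rightarrow> real \<Rightarrow> real \<Rightarrow> real \<Rightarrow> real" where
  "R_sr Ps Pr Cx gsr grr =
     (1/2) * log 2 (((Ps * gsr + Pr * grr + 1)^2 - (Pr * grr * Cx)^2) /
                    ((Pr * grr + 1)^2 - (Pr * grr * Cx)^2))"

definition Psi :: "real \<Rightarrow> real \<Rightarrow> real" where
  "Psi r x = sqrt (1 + (2 powr (2 * r) - 1) * (1 - x^2)) - 1"

definition gain_law :: "real \<Rightarrow> real \<Rightarrow> (real \<times> real) measure" where
  "gain_law pisr pirr =
     density lborel (exponential_density (1 / pisr)) \<Otimes>\<^sub>M
     density lborel (exponential_density (1 / pirr))"

definition P_sr :: "real \<Rightarrow> real \<Rightarrow> real \<Rightarrow> real \<Rightarrow> real \<Rightarrow> real \<Rightarrow> real" where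
  "P_sr Ps pisr pirr r Pr Cx =
     measure (gain_law pisr pirr) {(gsr, grr). R_sr Ps Pr Cx gsr grr < r}"

end

theory Submission
  imports Defs
begin

lemma sqrt_tangent:
  fixes A B C0 m y :: real
  assumes "A \<ge> 0" "B \<ge> 0" "C0 > 0" "B^2 \<ge> A*C0" "m \<ge> 0" "y \<ge> 0"
  shows "sqrt (A*y^2+2*B*y+C0) \<le> (B*m+C0+(A*m+B)*y) / sqrt (A*m^2+2*B*m+C0)"
proof -
  define Qy where "Qy = A*y^2+2*B*y+C0"
  define Qm where "Qm = A*m^2+2*B*m+C0"
  define N where "N = B*m+C0+(A*m+B)*y"
  have Qm: "Qm > 0" unfolding Qm_def using assms by (simp add: add_nonneg_pos)
  have Qy: "Qy \<ge> 0" unfolding Qy_def using assms by simp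
  have N: "N \<ge> 0" unfolding N_def using assms by simp
  have id: "N^2 - Qy*Qm = (y-m)^2*(B^2-A*C0)" unfolding N_def Qy_def Qm_def by algebra
  have "Qy*Qm \<le> N^2" using id assms(4) by (metis diff_ge_0_iff_ge zero_le_mult_iff zero_le_power2)
  hence "sqrt (Qy*Qm) \<le> N" using N by (simp add: real_sqrt_le_iff real_le_lsqrt)
  hence "sqrt Qy * sqrt Qm \<le> N" by (simp add: real_sqrt_mult)
  hence "sqrt Qy \<le> N / sqrt Qm" using Qm by (simp add: pos_le_divide_eq)
  thus ?thesis unfolding Qy_def Qm_def N_def .
qed

lemma rate_bound:
  fixes Ps Pr Cx r x y g :: real
  assumes Ps: "Ps > 0" and Pr: "Pr > 0" and r: "r > 0" and C0: "0 \<le> Cx" and C1: "Cx < 1"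
    and y: "y \<ge> 0" and g: "g = 2 powr (2*r) - 1"
    and R: "R_sr Ps Pr Cx x y < r"
  shows "x \<le> (sqrt ((Pr^2*(1+g-g*Cx^2))*y^2 + 2*((1+g)*Pr)*y + (1+g)) - Pr*y - 1) / Ps"
proof (rule ccontr)
  assume "\<not> ?thesis"
  hence "x > (sqrt ((Pr^2*(1+g-g*Cx^2))*y^2 + 2*((1+g)*Pr)*y + (1+g)) - Pr*y - 1) / Ps" by simp
  hence hx: "Ps*x + Pr*y + 1 > sqrt ((Pr^2*(1+g-g*Cx^2))*y^2 + 2*((1+g)*Pr)*y + (1+g))"
    using Ps by (simp add: pos_divide_less_eq mult.commute)
  define Q where "Q = (Pr^2*(1+g-g*Cx^2))*y^2 + 2*((1+g)*Pr)*y + (1+g)"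
  define D where "D = (Pr*y + 1)^2 - (Pr*y*Cx)^2"
  define N where "N = (Ps*x + Pr*y + 1)^2 - (Pr*y*Cx)^2"
  have g1: "1 + g = 2 powr (2*r)" using g by simp
  have gpos: "g > 0" using g r by simp
  have a0: "Pr*y \<ge> 0" using Pr y by simp
  have "(Pr*y*Cx)^2 \<le> (Pr*y)^2" using a0 C0 C1
    by (simp add: power_mult_distrib mult_left_le power_le_one)
  moreover have "(Pr*y)^2 < (Pr*y+1)^2" using a0 by (intro power_strict_mono) auto
  ultimately have Dpos: "D > 0" unfolding D_def by linarith
  have QD: "Q - (Pr*y*Cx)^2 = (1+g)*D" unfolding Q_def D_def by (simp add: power2_eq_square algebra_simps)
  have Qnn: "Q \<ge> 0" proof -
    have "(1+g)*D > 0" using gpos Dpos by simp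
    thus ?thesis using QD by (smt (verit) zero_le_power2)
  qed
  have "sqrt Q < Ps*x + Pr*y + 1" using hx unfolding Q_def .
  hence "(sqrt Q)^2 < (Ps*x + Pr*y + 1)^2"
    using Qnn by (intro power_strict_mono) auto
  hence "Q < (Ps*x + Pr*y + 1)^2" using Qnn by simp
  hence "(1+g)*D < N" unfolding N_def using QD by linarith
  hence "1 + g < N / D" using Dpos by (simp add: pos_less_divide_eq)
  hence h: "2 powr (2*r) < N / D" using g1 by simp
  have "0 < N/D" using h powr_gt_zero[of 2 "2*r"] by linarith
  hence "log 2 (2 powr (2*r)) < log 2 (N/D)" using h by (subst log_less_cancel_iff) auto
  hence "2*r < log 2 (N/D)" by simp
  hence "r < R_sr Ps Pr Cx x y" unfolding R_sr_def N_def D_def by simp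
  thus False using R by simp
qed

theorem lemma4:
  fixes Ps Pr pisr pirr r Cx :: real
  assumes "Ps > 0" and "Pr > 0" and "pisr > 0" and "pirr > 0" and "r > 0"
    and "0 \<le> Cx" and "Cx < 1"
  shows "P_sr Ps pisr pirr r Pr Cx \<le>
    1 - exp (- ((Pr * pirr + 1) / (Ps * pisr)) *
             Psi r ((Pr * pirr / (Pr * pirr + 1)) * Cx))"
proof -
  note Ps = assms(1) and Pr = assms(2) and pisr = assms(3) and pirr = assms(4) and r = assms(5)
    and C0 = assms(6) and C1 = assms(7)
  define g where "g = 2 powr (2*r) - 1"
  have gpos: "g > 0" using r unfolding g_def by simp
  define A where "A = Pr^2*(1+g-g*Cx^2)"
  define B where "B = (1+g)*Pr"
  define C where "C = 1+g"
  define Q where "Q y = A*y^2+2*B*y+C" for y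
  define c where "c y = (sqrt (Q y) - Pr*y - 1)/Ps" for y
  define l1 where "l1 = 1/pisr"
  define l2 where "l2 = 1/pirr"
  define m where "m = pirr"
  define G where "G y = 1 - exp (- l1 * c y)" for y
  define s where "s = sqrt (Q m)"
  define k where "k = ((A*m+B)/s - Pr)/Ps"
  define K where "K = exp (- l1 * c m) * l1 * k"
  define A0 where "A0 = G m - K*m"
  have l1pos: "l1 > 0" using pisr unfolding l1_def by simp
  have l2pos: "l2 > 0" using pirr unfolding l2_def by simp
  have mpos: "m > 0" using pirr unfolding m_def by simp
  have Cx2: "Cx^2 \<le> 1" using C0 C1 by (simp add: power_le_one)
  have A'1: "1 + g - g*Cx^2 \<ge> 1" using gpos Cx2 by (simp add: mult_left_le)
  have Apos: "A \<ge> 0" unfolding A_def using A'1 by simp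
  have Bpos: "B \<ge> 0" unfolding B_def using gpos Pr by simp
  have Cpos: "C > 0" unfolding C_def using gpos by simp
  have disc: "B^2 \<ge> A*C"
  proof -
    have "B^2 - A*C = (1+g)*Pr^2*g*Cx^2" unfolding A_def B_def C_def by (simp add: power2_eq_square algebra_simps)
    also have "\<dots> \<ge> 0" using gpos by simp
    finally show ?thesis by simp
  qed
  have Qm: "Q m > 0" unfolding Q_def using Apos Bpos Cpos mpos by (simp add: add_nonneg_pos)
  have spos: "s > 0" unfolding s_def using Qm by simp
  have s2: "s^2 = Q m" unfolding s_def using Qm by simp
  have rhs: "1 - exp (- ((Pr * pirr + 1) / (Ps * pisr)) *
             Psi r ((Pr * pirr / (Pr * pirr + 1)) * Cx)) = G m"
  proof -
    define t where "t = Pr * pirr / (Pr * pirr + 1) * Cx"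
    have a1: "Pr*pirr + 1 > 0" using Pr pirr by (simp add: add_pos_pos)
    have T1: "(Pr*pirr+1) * t = Pr*pirr*Cx" unfolding t_def using a1 by simp
    have "(Pr*pirr+1)^2 * (1 + g*(1 - t^2)) = (1+g)*(Pr*pirr+1)^2 - g*((Pr*pirr+1) * t)^2"
      by (simp add: power2_eq_square algebra_simps)
    also have "\<dots> = Q m" unfolding T1 Q_def A_def B_def C_def m_def
      by (simp add: power2_eq_square algebra_simps)
    finally have X: "(Pr*pirr+1)^2 * (1 + g*(1 - t^2)) = Q m" .
    have "(Pr*pirr+1) * sqrt (1 + g*(1 - t^2)) = sqrt (Q m)"
      using a1 X[symmetric] by (simp add: real_sqrt_mult)
    hence "(Pr * pirr + 1) / (Ps * pisr) * Psi r t = l1 * c m"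
      unfolding Psi_def g_def[symmetric] c_def l1_def m_def using Ps pisr
      by (simp add: field_simps)
    thus ?thesis unfolding G_def t_def by simp
  qed
  have tang: "G y \<le> G m + K*(y-m)" if y: "y \<ge> 0" for y
  proof -
    have "sqrt (Q y) \<le> (B*m+C+(A*m+B)*y) / s"
      unfolding Q_def s_def using sqrt_tangent[OF Apos Bpos Cpos disc _ y] mpos by simp
    also have "(B*m+C+(A*m+B)*y) / s = s + (A*m+B)*(y-m)/s"
    proof -
      have "B*m+C+(A*m+B)*y = s^2 + (A*m+B)*(y-m)" unfolding s2 Q_def
        by (simp add: power2_eq_square algebra_simps)
      thus ?thesis using spos by (simp add: field_simps power2_eq_square)
    qed
    finally have h1: "sqrt (Q y) \<le> s + (A*m+B)*(y-m)/s" .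
    have "c y \<le> c m + k*(y-m)"
    proof -
      have "c m + k*(y-m) = (s + (A*m+B)*(y-m)/s - Pr*y - 1)/Ps"
        unfolding c_def k_def s_def[symmetric] using Ps spos
        by (simp add: field_simps)
      thus ?thesis unfolding c_def using h1 Ps by (simp add: divide_right_mono)
    qed
    hence "l1 * c y \<le> l1 * (c m + k*(y-m))" using l1pos by (intro mult_left_mono) auto
    hence h2: "- l1 * c y \<ge> - l1 * c m - l1 * k*(y-m)" by (simp add: algebra_simps)
    have "exp (- l1 * c y) \<ge> exp (- l1 * c m - l1 * k*(y-m))" using h2 by simp
    also have "exp (- l1 * c m - l1 * k*(y-m)) = exp (- l1 * c m) * exp (- (l1 * k*(y-m)))"
      by (simp only: diff_conv_add_uminus exp_add)
    also have "\<dots> \<ge> exp (- l1 * c m) * (1 - l1 * k*(y-m))"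
      using exp_ge_add_one_self[of "- (l1 * k*(y-m))"] by (intro mult_left_mono) auto
    finally have "exp (- l1 * c y) \<ge> exp (- l1 * c m) * (1 - l1 * k*(y-m))" .
    thus ?thesis unfolding G_def K_def by (simp add: algebra_simps)
  qed
  have Kpos: "K \<ge> 0"
  proof -
    define A' where "A' = 1+g-g*Cx^2"
    define B' where "B' = 1+g"
    define a where "a = Pr*m"
    have a0: "a \<ge> 0" unfolding a_def using Pr mpos by simp
    have B'1: "B' \<ge> 1" unfolding B'_def using gpos by simp
    have A'1': "A' \<ge> 1" unfolding A'_def using A'1 .
    have id: "(A*m+B)^2 - Pr^2 * Q m = Pr^2*((A'^2 - A')*a^2 + 2*(A'-1)*B'*a + (B'^2 - B'))"
      unfolding A'_def B'_def a_def A_def B_def C_def Q_def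
      by (simp add: power2_eq_square algebra_simps)
    have t1: "(A'^2 - A')*a^2 \<ge> 0" using A'1' by (simp add: power2_eq_square)
    have t2: "2*(A'-1)*B'*a \<ge> 0" using A'1' B'1 a0 by simp
    have t3: "B'^2 - B' \<ge> 0" using B'1 by (simp add: power2_eq_square)
    have "(A*m+B)^2 - Pr^2 * Q m \<ge> 0" unfolding id using t1 t2 t3 by simp
    hence "Pr^2 * Q m \<le> (A*m+B)^2" by simp
    hence "sqrt (Pr^2 * Q m) \<le> sqrt ((A*m+B)^2)" by (rule real_sqrt_le_mono)
    moreover have "A*m+B \<ge> 0" using Apos Bpos mpos by simp
    ultimately have "Pr * s \<le> A*m+B" unfolding s_def using Pr by (simp add: real_sqrt_mult)
    hence "Pr \<le> (A*m+B)/s" using spos by (simp add: pos_le_divide_eq mult.commute)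
    hence "k \<ge> 0" unfolding k_def using Ps by simp
    thus ?thesis unfolding K_def using l1pos by simp
  qed
  have A0pos: "A0 \<ge> 0"
  proof -
    have "sqrt C \<ge> 1" unfolding C_def using gpos by simp
    hence "c 0 \<ge> 0" unfolding c_def Q_def using Ps by simp
    hence "G 0 \<ge> 0" unfolding G_def using l1pos by (simp add: mult_nonneg_nonneg)
    moreover have "G 0 \<le> G m + K*(0-m)" using tang[of 0] by simp
    ultimately show ?thesis unfolding A0_def by simp
  qed
  define M1 where "M1 = density lborel (exponential_density l1)"
  define M2 where "M2 = density lborel (exponential_density l2)"
  have gl: "gain_law pisr pirr = M1 \<Otimes>\<^sub>M M2"
    unfolding gain_law_def M1_def M2_def l1_def l2_def ..
  interpret M1: prob_space M1 unfolding M1_def using l1pos by (rule prob_space_exponential_density)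
  interpret M2: prob_space M2 unfolding M2_def using l2pos by (rule prob_space_exponential_density)
  interpret P: pair_prob_space M1 M2 by unfold_locales
  define S where "S = {(gsr, grr). R_sr Ps Pr Cx gsr grr < r}"
  define T where "T = {(x, y). y < 0 \<or> x \<le> c y}"
  have ST: "S \<subseteq> T"
  proof
    fix p assume "p \<in> S"
    then obtain x y where p: "p = (x,y)" and R: "R_sr Ps Pr Cx x y < r" unfolding S_def by auto
    show "p \<in> T"
    proof (cases "y < 0")
      case True thus ?thesis unfolding p T_def by simp
    next
      case False
      hence "x \<le> c y" unfolding c_def Q_def A_def B_def C_def
        using rate_bound[OF Ps Pr r C0 C1 _ g_def R] by simp
      thus ?thesis unfolding p T_def by simp
    qed
  qed
  have cm: "c \<in> borel_measurable borel" unfolding c_def Q_def by measurable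
  have Tm: "T \<in> sets (M1 \<Otimes>\<^sub>M M2)"
  proof -
    have eqs: "sets (M1 \<Otimes>\<^sub>M M2) = sets (borel \<Otimes>\<^sub>M borel)"
      by (rule sets_pair_measure_cong) (simp_all add: M1_def M2_def)
    have "T = {p \<in> space (borel \<Otimes>\<^sub>M borel). snd p < 0 \<or> fst p \<le> c (snd p)}"
      by (auto simp: T_def space_pair_measure)
    also have "\<dots> \<in> sets (borel \<Otimes>\<^sub>M borel)" using cm by measurable
    finally show ?thesis using eqs by simp
  qed
  have h0: "(\<integral>\<^sup>+ y. ennreal (exponential_density l2 y) \<partial>lborel) = 1"
    using nn_integral_erlang_ith_moment[OF l2pos, of 0 0] by simp
  have h1: "(\<integral>\<^sup>+ y. ennreal (exponential_density l2 y * y^1) \<partial>lborel) = ennreal m"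
    using nn_integral_erlang_ith_moment[OF l2pos, of 0 1] l2pos by (simp add: m_def l2_def)
  have AEy: "AE y in M2. 0 \<le> y" unfolding M2_def
    by (subst AE_density) (auto intro!: AE_I2 simp: exponential_density_def)
  have em: "emeasure (M1 \<Otimes>\<^sub>M M2) T \<le> ennreal (G m)"
  proof -
    have "emeasure (M1 \<Otimes>\<^sub>M M2) T = (\<integral>\<^sup>+y. emeasure M1 ((\<lambda>x. (x, y)) -` T) \<partial>M2)"
      by (rule P.emeasure_pair_measure_alt2[OF Tm])
    also have "\<dots> \<le> (\<integral>\<^sup>+y. ennreal (A0 + K*y) \<partial>M2)"
    proof (rule nn_integral_mono_AE)
      show "AE y in M2. emeasure M1 ((\<lambda>x. (x, y)) -` T) \<le> ennreal (A0 + K*y)"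
        using AEy
      proof eventually_elim
        fix y :: real assume y: "0 \<le> y"
        have "(\<lambda>x. (x, y)) -` T = {..c y}" using y by (auto simp: T_def)
        hence "emeasure M1 ((\<lambda>x. (x, y)) -` T) = ennreal (erlang_CDF 0 l1 (c y))"
          unfolding M1_def by (simp add: emeasure_erlang_density l1pos)
        also have "erlang_CDF 0 l1 (c y) \<le> A0 + K*y"
        proof (cases "0 \<le> c y")
          case True
          hence "erlang_CDF 0 l1 (c y) = G y" by (simp add: erlang_CDF_0 G_def)
          also have "\<dots> \<le> A0 + K*y" using tang[OF y] unfolding A0_def by (simp add: algebra_simps)
          finally show ?thesis .
        next
          case False
          thus ?thesis using A0pos Kpos y by (simp add: erlang_CDF_0)
        qed
        hence "ennreal (erlang_CDF 0 l1 (c y)) \<le> ennreal (A0 + K*y)" by (rule ennreal_leI)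
        finally show "emeasure M1 ((\<lambda>x. (x, y)) -` T) \<le> ennreal (A0 + K*y)" .
      qed
    qed
    also have "\<dots> = (\<integral>\<^sup>+y. ennreal (exponential_density l2 y) * ennreal (A0 + K*y) \<partial>lborel)"
      unfolding M2_def by (rule nn_integral_density) simp_all
    also have "\<dots> = (\<integral>\<^sup>+y. ennreal A0 * ennreal (exponential_density l2 y) +
                              ennreal K * ennreal (exponential_density l2 y * y^1) \<partial>lborel)"
    proof (rule nn_integral_cong)
      fix y :: real
      show "ennreal (exponential_density l2 y) * ennreal (A0 + K*y) =
            ennreal A0 * ennreal (exponential_density l2 y) + ennreal K * ennreal (exponential_density l2 y * y^1)"
      proof (cases "y < 0")
        case True thus ?thesis by (simp add: exponential_density_def)
      next
        case False
        have e: "exponential_density l2 y \<ge> 0" using l2pos by (simp add: exponential_density_nonneg)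
        have "ennreal (exponential_density l2 y) * ennreal (A0 + K*y) =
              ennreal (A0 * exponential_density l2 y + K * (exponential_density l2 y * y))"
          using e A0pos Kpos False by (simp add: ennreal_mult'[symmetric] algebra_simps)
        also have "\<dots> = ennreal (A0 * exponential_density l2 y) + ennreal (K * (exponential_density l2 y * y))"
          using e A0pos Kpos False by (intro ennreal_plus) auto
        also have "\<dots> = ennreal A0 * ennreal (exponential_density l2 y) + ennreal K * ennreal (exponential_density l2 y * y^1)"
          using e A0pos Kpos False by (simp add: ennreal_mult)
        finally show ?thesis .
      qed
    qed
    also have "\<dots> = ennreal A0 * (\<integral>\<^sup>+y. ennreal (exponential_density l2 y) \<partial>lborel) +
                     ennreal K * (\<integral>\<^sup>+y. ennreal (exponential_density l2 y * y^1) \<partial>lborel)"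
      by (simp add: nn_integral_add nn_integral_cmult)
    also have "\<dots> = ennreal (A0 + K*m)"
      unfolding h0 h1 using A0pos Kpos mpos by (simp add: ennreal_mult ennreal_plus)
    also have "A0 + K*m = G m" unfolding A0_def by simp
    finally show ?thesis .
  qed
  have "P_sr Ps pisr pirr r Pr Cx = measure (M1 \<Otimes>\<^sub>M M2) S"
    unfolding P_sr_def gl S_def ..
  also have "\<dots> \<le> measure (M1 \<Otimes>\<^sub>M M2) T" using ST Tm by (rule P.finite_measure_mono)
  also have "\<dots> \<le> G m"
  proof -
    have "G m \<ge> 0" using A0pos Kpos mpos unfolding A0_def by (smt (verit) mult_nonneg_nonneg)
    thus ?thesis using em by (simp add: P.emeasure_eq_measure)
  qed
  finally show ?thesis using rhs by simp
qed
end
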